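(* Let $\mathcal A\subseteq B(\mathcal H)$ be a unital w*-closed algebra and $\{\alpha_i\}_{i\in[d]}$ a uniformly bounded spatial action on $\mathcal A$. Then $(\mathcal A,\{\alpha_i\}_{i\in[d]})$ is a unital w*-dynamical system; that is, each $\alpha_i$ is a unital w*-continuous completely bounded endomorphism of $\mathcal A$ and $\sup_{\mu\in\mathbb F_+^d}\|\alpha_\mu\|<\infty$.
   Context: $d\in\{1,2,\dots\}\cup\{\infty\}$, $[d]=\{1,\dots,d\}$, $\mathbb F_+^d$ free semigroup on $[d]$, $\alpha_\mu=\alpha_{\mu_m}\cdots\alpha_{\mu_1}$ for $\mu=\mu_m\cdots\mu_1$. For $n\in\{1,2,\dots,\infty\}$ a row $u=[u_j]_{j\in[n]}\in B(\mathcal H\otimes\ell^2(n),\mathcal H)$ is invertible if there is a column $v=[v_j]^t\in B(\mathcal H,\mathcal H\otimes\ell^2(n))$ with $vu=I$ and $\sum_ju_jv_j=I_{\mathcal H}$. For invertible rows $u_i=[u_{i,j}]_{j\in[n_i]}$ with inverses $v_i$, set $\hat u_\mu=u_{\mu_m}(u_{\mu_{m-1}}\otimes I_{n_{\mu_m}})\cdots(u_{\mu_1}\otimes I_{n_{\mu_m}\cdots n_{\mu_2}})$ and $\hat v_\mu=(v_{\mu_1}\otimes I_{n_{\mu_m}\cdots n_{\mu_2}})\cdots(v_{\mu_{m-1}}\otimes I_{n_{\mu_m}})v_{\mu_m}$; $\{u_i\}$ is uniformly bounded if $\sup_\mu\max(\|\hat u_\mu\|,\|\hat v_\mu\|)<\infty$.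 A uniformly bounded spatial action on $\mathcal A$ is a family of maps $\alpha_i:\mathcal A\to\mathcal A$ with $\alpha_i(a)=\sum_{j\in[n_i]}u_{i,j}av_{i,j}$ for all $a\in\mathcal A$, where $\{u_i\}$ is uniformly bounded. *)

theory Defs
  imports "HOL-Analysis.Analysis"
begin

class complex_inner = real_normed_vector +
  fixes cscale :: "complex \<Rightarrow> 'a \<Rightarrow> 'a"
    and cinner :: "'a \<Rightarrow> 'a \<Rightarrow> complex"
  assumes cscale_add_right: "cscale c (x + y) = cscale c x + cscale c y"
    and cscale_add_left: "cscale (b + c) x = cscale b x + cscale c x"
    and cscale_mult: "cscale (b * c) x = cscale b (cscale c x)"
    and cscale_of_real: "cscale (complex_of_real r) x = scaleR r x"
    and cinner_conj_sym: "cinner x y = cnj (cinner y x)"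
    and cinner_add_right: "cinner x (y + z) = cinner x y + cinner x z"
    and cinner_cscale_right: "cinner x (cscale c y) = c * cinner x y"
    and cinner_self_nonneg: "0 \<le> Re (cinner x x)"
    and norm_eq_sqrt_cinner: "norm x = sqrt (Re (cinner x x))"

class chilbert_space = complex_inner + complete_space

definition bounded_clinear :: "('a::complex_inner \<Rightarrow> 'a) \<Rightarrow> bool" where
  "bounded_clinear T \<longleftrightarrow> bounded_linear T \<and> (\<forall>c x. T (cscale c x) = cscale c (T x))"

definition BH :: "('a::complex_inner \<Rightarrow> 'a) set" where
  "BH = {T. bounded_clinear T}"

text \<open>Unital (not necessarily self-adjoint) subalgebra of B(H).\<close>
definition unital_op_algebra :: "('a::complex_inner \<Rightarrow> 'a) set \<Rightarrow> bool" where
  "unital_op_algebra A \<longleftrightarrow> A \<subseteq> BH \<and> id \<in> A \<and>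
     (\<forall>a\<in>A. \<forall>b\<in>A. (\<lambda>x. a x + b x) \<in> A \<and> a \<circ> b \<in> A) \<and>
     (\<forall>c. \<forall>a\<in>A. (\<lambda>x. cscale c (a x)) \<in> A)"

definition normal_functionals :: "(('a::complex_inner \<Rightarrow> 'a) \<Rightarrow> complex) set" where
  "normal_functionals = {(\<lambda>T. \<Sum>k. cinner (y k) (T (x k))) | x y.
      summable (\<lambda>k. (norm (x k))\<^sup>2) \<and> summable (\<lambda>k. (norm (y k))\<^sup>2)}"

definition wstar_topology :: "('a::complex_inner \<Rightarrow> 'a) topology" where
  "wstar_topology = subtopology
     (topology_generated_by {{T. \<omega> T \<in> U} | \<omega> U. \<omega> \<in> normal_functionals \<and> open U}) BH"

definition wstar_closed :: "('a::complex_inner \<Rightarrow> 'a) set \<Rightarrow> bool" where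
  "wstar_closed A \<longleftrightarrow> closedin wstar_topology A"

text \<open>A row u = [u_j]_{j in J} is bounded by C as an operator H (x) l2(J) -> H
  (tested on finitely supported vectors).\<close>
definition row_bound :: "'b set \<Rightarrow> ('b \<Rightarrow> 'a::complex_inner \<Rightarrow> 'a) \<Rightarrow> real \<Rightarrow> bool" where
  "row_bound J u C \<longleftrightarrow> (\<forall>F \<xi>. finite F \<and> F \<subseteq> J \<longrightarrow>
     norm (\<Sum>j\<in>F. u j (\<xi> j)) \<le> C * sqrt (\<Sum>j\<in>F. (norm (\<xi> j))\<^sup>2))"

text \<open>A column v = [v_j]^t is bounded by C as an operator H -> H (x) l2(J).\<close>
definition col_bound :: "'b set \<Rightarrow> ('b \<Rightarrow> 'a::complex_inner \<Rightarrow> 'a) \<Rightarrow> real \<Rightarrow> bool" where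
  "col_bound J v C \<longleftrightarrow> (\<forall>x F. finite F \<and> F \<subseteq> J \<longrightarrow>
     sqrt (\<Sum>j\<in>F. (norm (v j x))\<^sup>2) \<le> C * norm x)"

definition invertible_row_with :: "'b set \<Rightarrow> ('b \<Rightarrow> 'a::complex_inner \<Rightarrow> 'a) \<Rightarrow> ('b \<Rightarrow> 'a \<Rightarrow> 'a) \<Rightarrow> bool" where
  "invertible_row_with J u v \<longleftrightarrow>
     (\<forall>j\<in>J. bounded_clinear (u j) \<and> bounded_clinear (v j)) \<and>
     (\<exists>C. row_bound J u C) \<and> (\<exists>C. col_bound J v C) \<and>
     (\<forall>j\<in>J. \<forall>k\<in>J. v k \<circ> u j = (if k = j then id else (\<lambda>_. 0))) \<and>
     (\<forall>x. ((\<lambda>j. u j (v j x)) has_sum x) J)"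

text \<open>[d] is rendered 0-based as {i. i < d} with d :: enat, d >= 1 (d = infinity allowed);
  n i :: enat is the length n_i of the i-th row, indexed 0-based by {j. j < n i}.\<close>
definition letters :: "enat \<Rightarrow> nat set" where
  "letters d = {i. enat i < d}"

definition row_idx :: "(nat \<Rightarrow> enat) \<Rightarrow> nat \<Rightarrow> nat set" where
  "row_idx n i = {j. enat j < n i}"

text \<open>Words mu = mu_m ... mu_1 are lists [mu_m, ..., mu_1]; the index set of the
  iterated row hat u_mu consists of lists [j_m, ..., j_1] with j_k < n_{mu_k}.\<close>
definition word_idx :: "(nat \<Rightarrow> enat) \<Rightarrow> nat list \<Rightarrow> nat list set" where
  "word_idx n \<mu> = {J. length J = length \<mu> \<and> (\<forall>k<length \<mu>. enat (J ! k) < n (\<mu> ! k))}"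

fun hat_u :: "(nat \<Rightarrow> nat \<Rightarrow> 'a \<Rightarrow> 'a) \<Rightarrow> nat list \<Rightarrow> nat list \<Rightarrow> 'a \<Rightarrow> 'a" where
  "hat_u u [] J = id"
| "hat_u u (i # \<mu>) J = u i (hd J) \<circ> hat_u u \<mu> (tl J)"

fun hat_v :: "(nat \<Rightarrow> nat \<Rightarrow> 'a \<Rightarrow> 'a) \<Rightarrow> nat list \<Rightarrow> nat list \<Rightarrow> 'a \<Rightarrow> 'a" where
  "hat_v v [] J = id"
| "hat_v v (i # \<mu>) J = hat_v v \<mu> (tl J) \<circ> v i (hd J)"

fun alpha_word :: "(nat \<Rightarrow> 'b \<Rightarrow> 'b) \<Rightarrow> nat list \<Rightarrow> 'b \<Rightarrow> 'b" where
  "alpha_word \<alpha> [] = id"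
| "alpha_word \<alpha> (i # \<mu>) = \<alpha> i \<circ> alpha_word \<alpha> \<mu>"

definition uniformly_bounded :: "enat \<Rightarrow> (nat \<Rightarrow> enat) \<Rightarrow> (nat \<Rightarrow> nat \<Rightarrow> 'a::complex_inner \<Rightarrow> 'a)
     \<Rightarrow> (nat \<Rightarrow> nat \<Rightarrow> 'a \<Rightarrow> 'a) \<Rightarrow> bool" where
  "uniformly_bounded d n u v \<longleftrightarrow>
     (\<forall>i\<in>letters d. n i \<ge> 1 \<and> invertible_row_with (row_idx n i) (u i) (v i)) \<and>
     (\<exists>C. \<forall>\<mu>. set \<mu> \<subseteq> letters d \<longrightarrow>
        row_bound (word_idx n \<mu>) (hat_u u \<mu>) C \<and> col_bound (word_idx n \<mu>) (hat_v v \<mu>) C)"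

definition ub_spatial_action :: "('a::complex_inner \<Rightarrow> 'a) set \<Rightarrow> enat \<Rightarrow> (nat \<Rightarrow> enat)
     \<Rightarrow> (nat \<Rightarrow> nat \<Rightarrow> 'a \<Rightarrow> 'a) \<Rightarrow> (nat \<Rightarrow> nat \<Rightarrow> 'a \<Rightarrow> 'a)
     \<Rightarrow> (nat \<Rightarrow> ('a \<Rightarrow> 'a) \<Rightarrow> ('a \<Rightarrow> 'a)) \<Rightarrow> bool" where
  "ub_spatial_action A d n u v \<alpha> \<longleftrightarrow>
     uniformly_bounded d n u v \<and>
     (\<forall>i\<in>letters d. \<alpha> i ` A \<subseteq> A \<and>
        (\<forall>a\<in>A. \<forall>x. ((\<lambda>j. u i j (a (v i j x))) has_sum \<alpha> i a x) (row_idx n i)))"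

definition mat_bound :: "nat \<Rightarrow> (nat \<Rightarrow> nat \<Rightarrow> 'a::real_normed_vector \<Rightarrow> 'a) \<Rightarrow> real \<Rightarrow> bool" where
  "mat_bound N a C \<longleftrightarrow> (\<forall>x. sqrt (\<Sum>i<N. (norm (\<Sum>j<N. a i j (x j)))\<^sup>2)
       \<le> C * sqrt (\<Sum>j<N. (norm (x j))\<^sup>2))"

definition completely_bounded_on :: "('a::complex_inner \<Rightarrow> 'a) set \<Rightarrow> (('a \<Rightarrow> 'a) \<Rightarrow> ('a \<Rightarrow> 'a)) \<Rightarrow> bool" where
  "completely_bounded_on A f \<longleftrightarrow> (\<exists>K. \<forall>N a C. (\<forall>i<N. \<forall>j<N. a i j \<in> A) \<longrightarrow>
      mat_bound N a C \<longrightarrow> mat_bound N (\<lambda>i j. f (a i j)) (K * C))"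

definition unital_endomorphism :: "('a::complex_inner \<Rightarrow> 'a) set \<Rightarrow> (('a \<Rightarrow> 'a) \<Rightarrow> ('a \<Rightarrow> 'a)) \<Rightarrow> bool" where
  "unital_endomorphism A f \<longleftrightarrow> f ` A \<subseteq> A \<and> f id = id \<and>
     (\<forall>a\<in>A. \<forall>b\<in>A. f (\<lambda>x. a x + b x) = (\<lambda>x. f a x + f b x) \<and> f (a \<circ> b) = f a \<circ> f b) \<and>
     (\<forall>c. \<forall>a\<in>A. f (\<lambda>x. cscale c (a x)) = (\<lambda>x. cscale c (f a x)))"

definition wstar_continuous_on :: "('a::complex_inner \<Rightarrow> 'a) set \<Rightarrow> (('a \<Rightarrow> 'a) \<Rightarrow> ('a \<Rightarrow> 'a)) \<Rightarrow> bool" where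
  "wstar_continuous_on A f \<longleftrightarrow>
     continuous_map (subtopology wstar_topology A) (subtopology wstar_topology A) f"

definition unital_wstar_dynamical_system :: "('a::complex_inner \<Rightarrow> 'a) set \<Rightarrow> enat
     \<Rightarrow> (nat \<Rightarrow> ('a \<Rightarrow> 'a) \<Rightarrow> ('a \<Rightarrow> 'a)) \<Rightarrow> bool" where
  "unital_wstar_dynamical_system A d \<alpha> \<longleftrightarrow>
     (\<forall>i\<in>letters d. unital_endomorphism A (\<alpha> i) \<and> wstar_continuous_on A (\<alpha> i)
        \<and> completely_bounded_on A (\<alpha> i)) \<and>
     (\<exists>K. \<forall>\<mu>. set \<mu> \<subseteq> letters d \<longrightarrow> (\<forall>a\<in>A. onorm (alpha_word \<alpha> \<mu> a) \<le> K * onorm a))"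

end

theory Submission
  imports Defs
begin




lemma cinner_add_left: "cinner (x + y) z = cinner x z + cinner y z"
  by (metis cinner_conj_sym cinner_add_right complex_cnj_add)

lemma cinner_cscale_left: "cinner (cscale c x) y = cnj c * cinner x y"
  by (metis cinner_conj_sym cinner_cscale_right complex_cnj_mult)

lemma cinner_zero_right[simp]: "cinner x 0 = 0"
  using cinner_add_right[of x 0 0] by simp

lemma cinner_zero_left[simp]: "cinner 0 x = 0"
  using cinner_add_left[of 0 0 x] by simp

lemma cinner_minus_right: "cinner x (- y) = - cinner x y"
  using cinner_add_right[of x y "-y"] by (simp add: add_eq_0_iff)

lemma cinner_minus_left: "cinner (- x) y = - cinner x y"
  using cinner_add_left[of x "-x" y] by (simp add: add_eq_0_iff)

lemma cinner_diff_right: "cinner x (y - z) = cinner x y - cinner x z"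
  using cinner_add_right[of x y "-z"] cinner_minus_right by simp

lemma cinner_diff_left: "cinner (x - y) z = cinner x z - cinner y z"
  using cinner_add_left[of x "-y" z] cinner_minus_left by simp

lemma cinner_scaleR_right: "cinner x (r *\<^sub>R y) = complex_of_real r * cinner x y"
  by (metis cinner_cscale_right cscale_of_real)

lemma cinner_scaleR_left: "cinner (r *\<^sub>R x) y = complex_of_real r * cinner x y"
  by (metis cinner_cscale_left cscale_of_real complex_cnj_complex_of_real)

lemma Im_cinner_self[simp]: "Im (cinner x x) = 0"
proof -
  have "Im (cinner x x) = - Im (cinner x x)" by (metis cnj.sel(2) cinner_conj_sym)
  then show ?thesis by simp
qed

lemma cinner_self: "cinner x x = complex_of_real ((norm x)\<^sup>2)"
  using norm_eq_sqrt_cinner[of x] cinner_self_nonneg[of x] Im_cinner_self[of x]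
  by (simp add: complex_eq_iff)

lemma Re_cinner_self: "Re (cinner x x) = (norm x)\<^sup>2"
  by (simp add: cinner_self)

lemma norm_cscale: "norm (cscale c x) = cmod c * norm x"
proof -
  have "(norm (cscale c x))\<^sup>2 = Re (cinner (cscale c x) (cscale c x))" by (simp add: Re_cinner_self)
  also have "\<dots> = Re (cnj c * c * cinner x x)" by (simp add: cinner_cscale_left cinner_cscale_right mult.assoc)
  also have "\<dots> = (cmod c)\<^sup>2 * (norm x)\<^sup>2"
  proof -
    have "cnj c * c = complex_of_real ((cmod c)\<^sup>2)" by (subst complex_norm_square) (rule mult.commute)
    then show ?thesis by (simp add: cinner_self)
  qed
  finally have "(norm (cscale c x))\<^sup>2 = (cmod c * norm x)\<^sup>2" by (simp add: power_mult_distrib)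
  then show ?thesis by (simp add: power2_eq_iff_nonneg)
qed

lemma cscale_zero_right[simp]: "cscale c 0 = 0"
  using cscale_add_right[of c 0 0] by simp

lemma cscale_minus_right: "cscale c (- x) = - cscale c x"
  using cscale_add_right[of c x "-x"] by (metis add_eq_0_iff cscale_zero_right add.right_inverse)

lemma cscale_diff_right: "cscale c (x - y) = cscale c x - cscale c y"
  using cscale_add_right[of c x "-y"] cscale_minus_right by simp

lemma cscale_one[simp]: "cscale 1 x = x"
  using cscale_of_real[of 1 x] by simp

lemma cscale_zero_left[simp]: "cscale 0 x = 0"
  using cscale_of_real[of 0 x] by simp

lemma cscale_scaleR_comm: "cscale c (r *\<^sub>R x) = r *\<^sub>R cscale c x"
  by (metis cscale_mult cscale_of_real mult.commute)

lemma bounded_linear_cscale: "bounded_linear (cscale c)"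
  apply (rule bounded_linear_intro[where K="cmod c"])
  by (simp_all add: cscale_add_right cscale_scaleR_comm norm_cscale mult.commute)

lemma cinner_expand:
  "Re (cinner (x - cscale t y) (x - cscale t y)) = (norm x)\<^sup>2 - 2 * Re (t * cinner x y) + (cmod t)\<^sup>2 * (norm y)\<^sup>2"
proof -
  have "cinner (x - cscale t y) (x - cscale t y) = cinner x x - t * cinner x y - cnj t * cinner y x + cnj t * t * cinner y y"
    by (simp add: cinner_diff_left cinner_diff_right cinner_cscale_left cinner_cscale_right) (simp add: algebra_simps)
  moreover have "Re (cnj t * cinner y x) = Re (t * cinner x y)"
    by (metis cinner_conj_sym complex_cnj_mult cnj.sel(1))
  moreover have "Re (cnj t * t * cinner y y) = (cmod t)\<^sup>2 * (norm y)\<^sup>2"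
  proof -
    have "cnj t * t = complex_of_real ((cmod t)\<^sup>2)" by (subst complex_norm_square) (rule mult.commute)
    then show ?thesis by (simp add: cinner_self)
  qed
  ultimately show ?thesis by (simp add: Re_cinner_self)
qed

lemma cauchy_schwarz: "cmod (cinner x y) \<le> norm x * norm y"
proof (cases "y = 0")
  case True then show ?thesis by simp
next
  case False
  define a where "a = cinner y x"
  define t where "t = a / complex_of_real ((norm y)\<^sup>2)"
  have ny: "norm y > 0" using False by simp
  have cxy: "cinner x y = cnj a" unfolding a_def by (rule cinner_conj_sym)
  have "t * cinner x y = complex_of_real ((cmod a)\<^sup>2) / complex_of_real ((norm y)\<^sup>2)"
    unfolding cxy t_def complex_norm_square by simp
  then have "t * cinner x y = complex_of_real ((cmod a)\<^sup>2 / (norm y)\<^sup>2)"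
    by simp
  then have 1: "Re (t * cinner x y) = (cmod a)\<^sup>2 / (norm y)\<^sup>2" by simp
  have 2: "(cmod t)\<^sup>2 * (norm y)\<^sup>2 = (cmod a)\<^sup>2 / (norm y)\<^sup>2"
  proof -
    have "cmod t = cmod a / (norm y)\<^sup>2" unfolding t_def by (simp add: norm_divide norm_power)
    then show ?thesis using ny by (simp add: power_divide field_simps power2_eq_square)
  qed
  have "0 \<le> Re (cinner (x - cscale t y) (x - cscale t y))" by (rule cinner_self_nonneg)
  then have "0 \<le> (norm x)\<^sup>2 - (cmod a)\<^sup>2 / (norm y)\<^sup>2"
    unfolding cinner_expand 1 2 by simp
  then have "(cmod a)\<^sup>2 \<le> (norm x)\<^sup>2 * (norm y)\<^sup>2"
    using ny by (simp add: field_simps)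
  then have "(cmod a)\<^sup>2 \<le> (norm x * norm y)\<^sup>2" by (simp add: power_mult_distrib)
  then have "cmod a \<le> norm x * norm y"
    by (meson norm_ge_zero power2_le_imp_le zero_le_mult_iff)
  moreover have "cmod (cinner x y) = cmod a" unfolding cxy by simp
  ultimately show ?thesis by simp
qed

lemma bounded_linear_cinner_right: "bounded_linear (cinner y)"
proof (rule bounded_linear_intro[where K="norm y"])
  show "cinner y (a + b) = cinner y a + cinner y b" for a b by (simp add: cinner_add_right)
  show "cinner y (r *\<^sub>R a) = r *\<^sub>R cinner y a" for r a by (simp add: cinner_scaleR_right scaleR_conv_of_real)
  show "norm (cinner y x) \<le> norm x * norm y" for x
    using cauchy_schwarz[of y x] by (simp add: mult.commute)
qed



lemma parallelogram:
  fixes p q :: "'a::complex_inner"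
  shows "(norm (p - q))\<^sup>2 + (norm (p + q))\<^sup>2 = 2 * (norm p)\<^sup>2 + 2 * (norm q)\<^sup>2"
proof -
  have "cinner (p - q) (p - q) + cinner (p + q) (p + q) = 2 * cinner p p + 2 * cinner q q"
    by (simp add: cinner_diff_left cinner_diff_right cinner_add_left cinner_add_right)
  then have "Re (cinner (p - q) (p - q) + cinner (p + q) (p + q)) = Re (2 * cinner p p + 2 * cinner q q)"
    by simp
  then show ?thesis by (simp add: Re_cinner_self)
qed

lemma orth_aux:
  fixes z m :: "'a::complex_inner"
  assumes zm: "\<And>t. norm z \<le> norm (z - cscale t m)"
  shows "cinner z m = 0"
proof -
  define q where "q = (cmod (cinner z m))\<^sup>2"
  define M where "M = (norm m)\<^sup>2"
  define r where "r = 1 / (M + 1)"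
  have M0: "M \<ge> 0" by (simp add: M_def)
  have r0: "r > 0" using M0 by (simp add: r_def)
  define t where "t = complex_of_real r * cnj (cinner z m)"
  have "(norm z)\<^sup>2 \<le> (norm (z - cscale t m))\<^sup>2" using zm[of t] by (intro power_mono) auto
  also have "\<dots> = (norm z)\<^sup>2 - 2 * Re (t * cinner z m) + (cmod t)\<^sup>2 * M"
    using cinner_expand[of z t m] by (simp add: Re_cinner_self M_def)
  also have "Re (t * cinner z m) = r * q"
  proof -
    have "t * cinner z m = complex_of_real r * (cinner z m * cnj (cinner z m))"
      unfolding t_def by (simp only: mult_ac)
    also have "cinner z m * cnj (cinner z m) = complex_of_real q"
      unfolding q_def by (rule complex_norm_square[symmetric])
    finally show ?thesis by simp
  qed
  also have "(cmod t)\<^sup>2 = r\<^sup>2 * q"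
    using r0 by (simp add: t_def q_def norm_mult power_mult_distrib)
  finally have "0 \<le> r * q * (r * M - 2)" by (simp add: algebra_simps power2_eq_square)
  moreover have "r * M - 2 < 0"
  proof -
    have "r * M = M / (M + 1)" by (simp add: r_def)
    also have "\<dots> < 1" using M0 by simp
    finally show ?thesis by simp
  qed
  moreover have "q \<ge> 0" by (simp add: q_def)
  ultimately have rq: "r * q \<le> 0"
  proof -
    assume a: "0 \<le> r * q * (r * M - 2)" and b: "r * M - 2 < 0"
    show "r * q \<le> 0"
    proof (rule ccontr)
      assume "\<not> r * q \<le> 0"
      then have "r * q > 0" by simp
      then have "r * q * (r * M - 2) < 0" using b by (rule mult_pos_neg)
      then show False using a by simp
    qed
  qed
  have "q \<le> 0"
  proof (rule ccontr)
    assume "\<not> q \<le> 0"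
    then have "q > 0" by simp
    then have "r * q > 0" using r0 by simp
    then show False using rq by simp
  qed
  then have "q = 0" using \<open>q \<ge> 0\<close> by simp
  then show ?thesis by (simp add: q_def)
qed

lemma cauchy_min_seq:
  fixes s :: "nat \<Rightarrow> 'a::real_normed_vector"
  assumes sS: "\<And>n. s n \<in> S"
    and sn: "\<And>n. norm (s n) < \<delta> + 1 / (real n + 1)"
    and key: "\<And>p q e. p \<in> S \<Longrightarrow> q \<in> S \<Longrightarrow> norm p < \<delta> + e \<Longrightarrow> norm q < \<delta> + e \<Longrightarrow> 0 \<le> e \<Longrightarrow> e \<le> 1
        \<Longrightarrow> (norm (p - q))\<^sup>2 \<le> 4 * e * (2 * \<delta> + 1)"
    and \<delta>0: "\<delta> \<ge> 0"
  shows "Cauchy s"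
proof (rule metric_CauchyI)
  fix \<epsilon> :: real assume \<epsilon>: "\<epsilon> > 0"
  define K where "K = 2 * \<delta> + 1"
  have K0: "K > 0" using \<delta>0 by (simp add: K_def)
  define e where "e = min 1 (\<epsilon>\<^sup>2 / (4 * K))"
  have e0: "e > 0" using \<epsilon> K0 by (simp add: e_def)
  have eK: "e * K \<le> \<epsilon>\<^sup>2 / 4"
  proof -
    have "e \<le> \<epsilon>\<^sup>2 / (4 * K)" by (simp add: e_def)
    then have "e * K \<le> \<epsilon>\<^sup>2 / (4 * K) * K" using K0 by (intro mult_right_mono) auto
    also have "\<dots> = \<epsilon>\<^sup>2 / 4" using K0 by simp
    finally show ?thesis .
  qed
  obtain N :: nat where "1 / real (Suc N) < e"
    using nat_approx_posE[OF e0] by blast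
  then have N: "1 / (real N + 1) < e" by (simp add: add.commute)
  define e' where "e' = 1 / (real N + 1)"
  have e'e: "e' < e" using N by (simp add: e'_def)
  have e'0: "0 \<le> e'" "e' \<le> 1" by (auto simp: e'_def)
  show "\<exists>M. \<forall>m\<ge>M. \<forall>n\<ge>M. dist (s m) (s n) < \<epsilon>"
  proof (intro exI[of _ N] allI impI)
    fix m n assume mn: "m \<ge> N" "n \<ge> N"
    have le: "1 / (real k + 1) \<le> e'" if "k \<ge> N" for k
      using that unfolding e'_def by (intro divide_left_mono) auto
    have "(norm (s m - s n))\<^sup>2 \<le> 4 * e' * K"
      unfolding K_def
    proof (rule key[OF sS sS _ _ e'0])
      show "norm (s m) < \<delta> + e'" using sn[of m] le[OF mn(1)] by linarith
      show "norm (s n) < \<delta> + e'" using sn[of n] le[OF mn(2)] by linarith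
    qed
    also have "\<dots> < 4 * e * K" using e'e K0 by simp
    also have "\<dots> \<le> \<epsilon>\<^sup>2" using eK by linarith
    finally have sq: "(norm (s m - s n))\<^sup>2 < \<epsilon>\<^sup>2" .
    show "dist (s m) (s n) < \<epsilon>"
      unfolding dist_norm using power_less_imp_less_base[OF sq] \<epsilon> by simp
  qed
qed

lemma riesz:
  fixes f :: "'a::chilbert_space \<Rightarrow> complex"
  assumes add: "\<And>x y. f (x + y) = f x + f y"
    and sc: "\<And>c x. f (cscale c x) = c * f x"
    and bd: "\<And>x. cmod (f x) \<le> B * norm x"
  shows "\<exists>w. \<forall>x. f x = cinner w x"
proof (cases "\<forall>x. f x = 0")
  case True
  then show ?thesis by (intro exI[of _ 0]) simp
next
  case False
  have f0: "f 0 = 0" using add[of 0 0] by simp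
  have fminus: "f (- x) = - f x" for x
    using sc[of "-1" x] cscale_of_real[of "-1" x] by simp
  have fdiff: "f (x - y) = f x - f y" for x y
    using add[of x "-y"] fminus[of y] by simp
  have fcont: "isCont f x" for x
  proof -
    have "(\<lambda>y. f y) \<midarrow>x\<rightarrow> f x"
    proof (rule LIM_I)
      fix r :: real assume r: "r > 0"
      show "\<exists>s>0. \<forall>y. y \<noteq> x \<and> norm (y - x) < s \<longrightarrow> norm (f y - f x) < r"
      proof (intro exI[of _ "r / (\<bar>B\<bar> + 1)"] conjI allI impI)
        show "r / (\<bar>B\<bar> + 1) > 0" using r by simp
        fix y assume "y \<noteq> x \<and> norm (y - x) < r / (\<bar>B\<bar> + 1)"
        then have ny: "norm (y - x) < r / (\<bar>B\<bar> + 1)" by simp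
        have "norm (f y - f x) = cmod (f (y - x))" by (simp add: fdiff)
        also have "\<dots> \<le> B * norm (y - x)" by (rule bd)
        also have "\<dots> \<le> (\<bar>B\<bar> + 1) * norm (y - x)"
          by (intro mult_right_mono) auto
        also have "\<dots> < (\<bar>B\<bar> + 1) * (r / (\<bar>B\<bar> + 1))"
          using ny by (intro mult_strict_left_mono) auto
        also have "\<dots> = r" by simp
        finally show "norm (f y - f x) < r" .
      qed
    qed
    then show ?thesis by (simp add: isCont_def)
  qed
  from False obtain x0 where x0: "f x0 \<noteq> 0" by blast
  define S where "S = {x. f x = 1}"
  have x1S: "cscale (1 / f x0) x0 \<in> S" using x0 by (simp add: S_def sc)
  define \<delta> where "\<delta> = Inf (norm ` S)"
  have bdd: "bdd_below (norm ` S)" by (rule bdd_belowI[of _ 0]) auto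
  have \<delta>le: "\<delta> \<le> norm s" if "s \<in> S" for s
    unfolding \<delta>_def using bdd that by (simp add: cInf_lower)
  have \<delta>0: "\<delta> \<ge> 0"
    unfolding \<delta>_def using x1S by (intro cInf_greatest) auto
  have "\<exists>s\<in>S. norm s < \<delta> + 1 / (real n + 1)" for n
  proof -
    have i: "Inf (norm ` S) < \<delta> + 1 / (real n + 1)" unfolding \<delta>_def by simp
    have ne: "norm ` S \<noteq> {}" using x1S by blast
    from cInf_lessD[OF ne i] show ?thesis by blast
  qed
  then have "\<forall>n. \<exists>s. s \<in> S \<and> norm s < \<delta> + 1 / (real n + 1)" by blast
  from choice[OF this] obtain s where "\<forall>n. s n \<in> S \<and> norm (s n) < \<delta> + 1 / (real n + 1)"
    by blast
  then have sS: "\<And>n. s n \<in> S" and sn: "\<And>n. norm (s n) < \<delta> + 1 / (real n + 1)"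
    by auto
  have key: "(norm (p - q))\<^sup>2 \<le> 4 * e * (2 * \<delta> + 1)"
    if "p \<in> S" "q \<in> S" "norm p < \<delta> + e" "norm q < \<delta> + e" "0 \<le> e" "e \<le> 1" for p q e
  proof -
    have "f (cscale (1/2) (p + q)) = 1" using that(1,2) by (simp add: S_def sc add)
    then have "\<delta> \<le> norm (cscale (1/2) (p + q))" using \<delta>le S_def by blast
    also have "\<dots> = norm (p + q) / 2" by (simp add: norm_cscale)
    finally have "2 * \<delta> \<le> norm (p + q)" by simp
    then have "(2 * \<delta>)\<^sup>2 \<le> (norm (p + q))\<^sup>2"
      by (rule power_mono) (use \<delta>0 in auto)
    then have a: "4 * \<delta>\<^sup>2 \<le> (norm (p + q))\<^sup>2" by (simp add: power_mult_distrib)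
    have b: "(norm p)\<^sup>2 \<le> (\<delta> + e)\<^sup>2" using that(3) by (intro power_mono) auto
    have c: "(norm q)\<^sup>2 \<le> (\<delta> + e)\<^sup>2" using that(4) by (intro power_mono) auto
    have "(norm (p - q))\<^sup>2 = 2 * (norm p)\<^sup>2 + 2 * (norm q)\<^sup>2 - (norm (p + q))\<^sup>2"
      using parallelogram[of p q] by simp
    also have "\<dots> \<le> 4 * (\<delta> + e)\<^sup>2 - 4 * \<delta>\<^sup>2" using a b c by simp
    also have "\<dots> = 4 * e * (2 * \<delta> + e)" by (simp add: power2_eq_square algebra_simps)
    also have "\<dots> \<le> 4 * e * (2 * \<delta> + 1)" using that by (intro mult_left_mono) auto
    finally show ?thesis .
  qed
  have "Cauchy s" by (rule cauchy_min_seq[OF sS sn key \<delta>0])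
  then obtain z where sz: "s \<longlonglongrightarrow> z" using Cauchy_convergent_iff convergent_def by blast
  have fz: "f z = 1"
  proof -
    have "(\<lambda>n. f (s n)) \<longlonglongrightarrow> f z" using sz fcont isCont_tendsto_compose by blast
    moreover have "(\<lambda>n. f (s n)) = (\<lambda>n. 1)" using sS by (simp add: S_def)
    ultimately show ?thesis by (simp add: LIMSEQ_const_iff)
  qed
  have zmin: "norm z \<le> norm x" if "x \<in> S" for x
  proof -
    have "(\<lambda>n. norm (s n)) \<longlonglongrightarrow> norm z" using sz by (rule tendsto_norm)
    moreover have "(\<lambda>n. \<delta> + 1 / (real n + 1)) \<longlonglongrightarrow> \<delta> + 0"
      using LIMSEQ_inverse_real_of_nat_add[of \<delta>] by (simp add: inverse_eq_divide add.commute)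
    ultimately have "norm z \<le> \<delta> + 0"
      by (rule LIMSEQ_le) (use sn less_imp_le in auto)
    then show ?thesis using \<delta>le[OF that] by simp
  qed
  have orth: "cinner z m = 0" if fm: "f m = 0" for m
  proof (rule orth_aux)
    fix t
    have "z - cscale t m \<in> S" using fz fm by (simp add: S_def fdiff sc)
    then show "norm z \<le> norm (z - cscale t m)" by (rule zmin)
  qed
  have z0: "norm z > 0" using fz f0 by (cases "z = 0") auto
  define w where "w = cscale (complex_of_real (1 / (norm z)\<^sup>2)) z"
  show ?thesis
  proof (intro exI[of _ w] allI)
    fix x
    have "f (x - cscale (f x) z) = 0" by (simp add: fdiff sc fz)
    then have "cinner z (x - cscale (f x) z) = 0" by (rule orth)
    then have "cinner z x = f x * cinner z z"
      by (simp add: cinner_diff_right cinner_cscale_right)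
    then show "f x = cinner w x"
      using z0 by (simp add: w_def cinner_cscale_left cinner_self)
  qed
qed

lemma adjoint_exists:
  fixes u :: "'a::chilbert_space \<Rightarrow> 'a"
  assumes "bounded_clinear u"
  shows "\<exists>u'. \<forall>y z. cinner y (u z) = cinner (u' y) z"
proof -
  have bl: "bounded_linear u" and cl: "\<And>c x. u (cscale c x) = cscale c (u x)"
    using assms by (auto simp: bounded_clinear_def)
  obtain K where K: "\<And>x. norm (u x) \<le> norm x * K"
    using bounded_linear.bounded[OF bl] by blast
  have "\<exists>w. \<forall>z. cinner y (u z) = cinner w z" for y
  proof (rule riesz[where B="norm y * K"])
    show "cinner y (u (x + z)) = cinner y (u x) + cinner y (u z)" for x z
      by (simp add: linear_add[OF bounded_linear.linear[OF bl]] cinner_add_right)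
    show "cinner y (u (cscale c x)) = c * cinner y (u x)" for c x
      by (simp add: cl cinner_cscale_right)
    show "cmod (cinner y (u x)) \<le> norm y * K * norm x" for x
    proof -
      have "cmod (cinner y (u x)) \<le> norm y * norm (u x)" by (rule cauchy_schwarz)
      also have "\<dots> \<le> norm y * (norm x * K)" by (intro mult_left_mono K) auto
      finally show ?thesis by (simp add: algebra_simps)
    qed
  qed
  then have "\<forall>y. \<exists>w. \<forall>z. cinner y (u z) = cinner w z" by blast
  from choice[OF this] show ?thesis by blast
qed



lemma chilbert_banach_test: "complete (UNIV :: 'a::chilbert_space set)"
  by (simp add: complete_UNIV)

subclass (in chilbert_space) banach ..

lemma has_sum_norm_le:
  assumes "(f has_sum a) A" "\<And>F. finite F \<Longrightarrow> F \<subseteq> A \<Longrightarrow> norm (sum f F) \<le> b"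
  shows "norm a \<le> b"
proof -
  have "((\<lambda>F. norm (sum f F)) \<longlongrightarrow> norm a) (finite_subsets_at_top A)"
    using assms(1) unfolding has_sum_def by (rule tendsto_norm)
  moreover have "eventually (\<lambda>F. norm (sum f F) \<le> b) (finite_subsets_at_top A)"
    by (rule eventually_finite_subsets_at_top_weakI) (rule assms(2))
  ultimately show ?thesis
    using finite_subsets_at_top_neq_bot by (rule tendsto_upperbound)
qed

lemma summable_on_cauchyI:
  fixes f :: "'b \<Rightarrow> 'a::banach"
  assumes H: "\<And>e. e > 0 \<Longrightarrow> \<exists>F0. finite F0 \<and> F0 \<subseteq> A \<and> (\<forall>G. finite G \<and> G \<subseteq> A - F0 \<longrightarrow> norm (sum f G) < e)"
  shows "f summable_on A"
proof -
  have "\<exists>P. eventually P (finite_subsets_at_top A) \<and> (\<forall>F F'. P F \<and> P F' \<longrightarrow> dist (sum f F) (sum f F') < e)"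
    if e: "e > 0" for e
  proof -
    obtain F0 where F0: "finite F0" "F0 \<subseteq> A"
      and G: "\<And>G. finite G \<Longrightarrow> G \<subseteq> A - F0 \<Longrightarrow> norm (sum f G) < e / 2"
      using H[of "e/2"] e by auto
    define P where "P F \<longleftrightarrow> finite F \<and> F0 \<subseteq> F \<and> F \<subseteq> A" for F
    have "eventually P (finite_subsets_at_top A)"
      unfolding eventually_finite_subsets_at_top P_def using F0 by blast
    moreover have "dist (sum f F1) (sum f F2) < e" if "P F1" "P F2" for F1 F2
    proof -
      have s1: "sum f F1 = sum f F0 + sum f (F1 - F0)"
        using that(1) unfolding P_def by (metis add.commute sum.subset_diff)
      have s2: "sum f F2 = sum f F0 + sum f (F2 - F0)"
        using that(2) unfolding P_def by (metis add.commute sum.subset_diff)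
      have "dist (sum f F1) (sum f F2) = norm (sum f (F1 - F0) - sum f (F2 - F0))"
        unfolding dist_norm s1 s2 by simp
      also have "\<dots> \<le> norm (sum f (F1 - F0)) + norm (sum f (F2 - F0))"
        by (rule norm_triangle_ineq4)
      also have "\<dots> < e / 2 + e / 2"
        using that unfolding P_def by (intro add_strict_mono G) auto
      finally show ?thesis by simp
    qed
    ultimately show ?thesis by blast
  qed
  then have "cauchy_filter (filtermap (sum f) (finite_subsets_at_top A))"
    by (simp add: cauchy_filter_metric_filtermap)
  moreover have "complete (UNIV::'a set)"
    by (meson Cauchy_convergent UNIV_I complete_def convergent_def)
  ultimately obtain L' where "(sum f \<longlongrightarrow> L') (finite_subsets_at_top A)"
    using complete_uniform[where S=UNIV] by (force simp add: filterlim_def)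
  then show ?thesis
    using summable_on_def has_sum_def by blast
qed

lemma row_bound_mono: "row_bound J u C \<Longrightarrow> C \<le> C' \<Longrightarrow> row_bound J u C'"
  unfolding row_bound_def by (meson mult_right_mono order_trans real_sqrt_ge_zero sum_nonneg zero_le_power2)

lemma col_bound_mono: "col_bound J v C \<Longrightarrow> C \<le> C' \<Longrightarrow> col_bound J v C'"
  unfolding col_bound_def by (meson mult_right_mono order_trans norm_ge_zero)

lemma row_bound_subset: "row_bound J u C \<Longrightarrow> J' \<subseteq> J \<Longrightarrow> row_bound J' u C"
  unfolding row_bound_def by blast

lemma col_summable:
  assumes cb: "col_bound J v C"
  shows "(\<lambda>j. (norm (v j x))\<^sup>2) summable_on J"
    and "(\<Sum>\<^sub>\<infinity>j\<in>J. (norm (v j x))\<^sup>2) \<le> (C * norm x)\<^sup>2"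
proof -
  have c0: "0 \<le> C * norm x"
    using cb[unfolded col_bound_def, rule_format, of "{}" x] by simp
  have fin: "sum (\<lambda>j. (norm (v j x))\<^sup>2) F \<le> (C * norm x)\<^sup>2" if "finite F" "F \<subseteq> J" for F
  proof -
    have "sqrt (sum (\<lambda>j. (norm (v j x))\<^sup>2) F) \<le> C * norm x"
      using cb that unfolding col_bound_def by blast
    moreover have S0: "0 \<le> sum (\<lambda>j. (norm (v j x))\<^sup>2) F" by (intro sum_nonneg) simp
    ultimately have "(sqrt (sum (\<lambda>j. (norm (v j x))\<^sup>2) F))\<^sup>2 \<le> (C * norm x)\<^sup>2"
      by (intro power_mono) simp_all
    then show ?thesis using S0 by simp
  qed
  show sm: "(\<lambda>j. (norm (v j x))\<^sup>2) summable_on J"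
  proof (rule nonneg_bdd_above_summable_on)
    show "bdd_above (sum (\<lambda>j. (norm (v j x))\<^sup>2) ` {F. F \<subseteq> J \<and> finite F})"
      by (rule bdd_aboveI[where M="(C * norm x)\<^sup>2"]) (use fin in blast)
  qed simp
  show "(\<Sum>\<^sub>\<infinity>j\<in>J. (norm (v j x))\<^sup>2) \<le> (C * norm x)\<^sup>2"
    by (rule infsum_le_finite_sums[OF sm fin])
qed

lemma row_apply:
  fixes u :: "'b \<Rightarrow> 'a::chilbert_space \<Rightarrow> 'a"
  assumes rb: "row_bound J u C" and C: "C \<ge> 0"
    and sq: "(\<lambda>j. (norm (\<xi> j))\<^sup>2) summable_on J"
  shows "(\<lambda>j. u j (\<xi> j)) summable_on J"
    and "norm (\<Sum>\<^sub>\<infinity>j\<in>J. u j (\<xi> j)) \<le> C * sqrt (\<Sum>\<^sub>\<infinity>j\<in>J. (norm (\<xi> j))\<^sup>2)"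
proof -
  define S where "S = (\<Sum>\<^sub>\<infinity>j\<in>J. (norm (\<xi> j))\<^sup>2)"
  have fle: "sum (\<lambda>j. (norm (\<xi> j))\<^sup>2) F \<le> S" if "finite F" "F \<subseteq> J" for F
    unfolding S_def by (rule finite_sum_le_infsum[OF sq that]) auto
  have rb': "norm (\<Sum>j\<in>F. u j (\<xi> j)) \<le> C * sqrt (\<Sum>j\<in>F. (norm (\<xi> j))\<^sup>2)"
    if "finite F" "F \<subseteq> J" for F
    using rb that unfolding row_bound_def by blast
  show sm: "(\<lambda>j. u j (\<xi> j)) summable_on J"
  proof (rule summable_on_cauchyI)
    fix e :: real assume e: "e > 0"
    define \<epsilon> where "\<epsilon> = (e / (C + 1))\<^sup>2"
    have \<epsilon>0: "\<epsilon> > 0" using e C by (simp add: \<epsilon>_def)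
    obtain F0 where F0: "finite F0" "F0 \<subseteq> J"
      and d: "dist (sum (\<lambda>j. (norm (\<xi> j))\<^sup>2) F0) S \<le> \<epsilon>"
      using infsum_finite_approximation[OF sq \<epsilon>0] unfolding S_def by blast
    show "\<exists>F0. finite F0 \<and> F0 \<subseteq> J \<and> (\<forall>G. finite G \<and> G \<subseteq> J - F0 \<longrightarrow> norm (\<Sum>j\<in>G. u j (\<xi> j)) < e)"
    proof (intro exI[of _ F0] conjI allI impI F0)
      fix G assume G: "finite G \<and> G \<subseteq> J - F0"
      have "sum (\<lambda>j. (norm (\<xi> j))\<^sup>2) (F0 \<union> G) \<le> S"
        using G F0 by (intro fle) auto
      moreover have "sum (\<lambda>j. (norm (\<xi> j))\<^sup>2) (F0 \<union> G) = sum (\<lambda>j. (norm (\<xi> j))\<^sup>2) F0 + sum (\<lambda>j. (norm (\<xi> j))\<^sup>2) G"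
        using G F0 by (intro sum.union_disjoint) auto
      moreover have "S - sum (\<lambda>j. (norm (\<xi> j))\<^sup>2) F0 \<le> \<epsilon>"
        using d unfolding dist_real_def by linarith
      ultimately have sG: "sum (\<lambda>j. (norm (\<xi> j))\<^sup>2) G \<le> \<epsilon>" by linarith
      have "norm (\<Sum>j\<in>G. u j (\<xi> j)) \<le> C * sqrt (\<Sum>j\<in>G. (norm (\<xi> j))\<^sup>2)"
        using G by (intro rb') auto
      also have "\<dots> \<le> C * sqrt \<epsilon>"
        using sG C by (intro mult_left_mono) auto
      also have "sqrt \<epsilon> = e / (C + 1)" using e C by (simp add: \<epsilon>_def)
      also have "C * (e / (C + 1)) < e"
        using e C by (simp add: field_simps)
      finally show "norm (\<Sum>j\<in>G. u j (\<xi> j)) < e" .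
    qed
  qed
  show "norm (\<Sum>\<^sub>\<infinity>j\<in>J. u j (\<xi> j)) \<le> C * sqrt S"
  proof (rule has_sum_norm_le[OF has_sum_infsum[OF sm]])
    fix F assume F: "finite F" "F \<subseteq> J"
    have "norm (\<Sum>j\<in>F. u j (\<xi> j)) \<le> C * sqrt (\<Sum>j\<in>F. (norm (\<xi> j))\<^sup>2)" by (rule rb'[OF F])
    also have "\<dots> \<le> C * sqrt S" using fle[OF F] C by (intro mult_left_mono) auto
    finally show "norm (sum (\<lambda>j. u j (\<xi> j)) F) \<le> C * sqrt S" .
  qed
qed



lemma has_sum_single_at:
  assumes "k \<in> J" "\<And>j. j \<in> J \<Longrightarrow> j \<noteq> k \<Longrightarrow> f j = 0"
  shows "(f has_sum f k) J"
proof -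
  have "(f has_sum f k) {k}" using has_sum_finite[of "{k}" f] by simp
  then show ?thesis
    by (subst has_sum_cong_neutral[where T="{k}"]) (use assms in auto)
qed

lemma bounded_clinear_linear:
  "bounded_clinear f \<Longrightarrow> bounded_linear f"
  by (simp add: bounded_clinear_def)

lemma bounded_clinear_add: "bounded_clinear f \<Longrightarrow> f (x + y) = f x + f y"
  by (simp add: bounded_clinear_def linear_add bounded_linear.linear)

lemma bounded_clinear_cscale: "bounded_clinear f \<Longrightarrow> f (cscale c x) = cscale c (f x)"
  by (simp add: bounded_clinear_def)

lemma bounded_clinear_zero: "bounded_clinear f \<Longrightarrow> f 0 = 0"
  by (simp add: bounded_clinear_def linear_0 bounded_linear.linear)

lemma single_row_endo:
  fixes A :: "('a::chilbert_space \<Rightarrow> 'a) set"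
  assumes alg: "unital_op_algebra A"
    and inv: "invertible_row_with J u v"
    and into: "\<beta> ` A \<subseteq> A"
    and hs: "\<And>a x. a \<in> A \<Longrightarrow> ((\<lambda>j. u j (a (v j x))) has_sum \<beta> a x) J"
  shows "unital_endomorphism A \<beta>"
proof -
  have ubc: "\<And>j. j \<in> J \<Longrightarrow> bounded_clinear (u j)" and vbc: "\<And>j. j \<in> J \<Longrightarrow> bounded_clinear (v j)"
    using inv by (auto simp: invertible_row_with_def)
  have vu: "\<And>j k. j \<in> J \<Longrightarrow> k \<in> J \<Longrightarrow> v k \<circ> u j = (if k = j then id else (\<lambda>_. 0))"
    using inv by (auto simp: invertible_row_with_def)
  have uv: "\<And>x. ((\<lambda>j. u j (v j x)) has_sum x) J"
    using inv by (auto simp: invertible_row_with_def)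
  have idA: "id \<in> A" and addA: "\<And>a b. a \<in> A \<Longrightarrow> b \<in> A \<Longrightarrow> (\<lambda>x. a x + b x) \<in> A"
    and compA: "\<And>a b. a \<in> A \<Longrightarrow> b \<in> A \<Longrightarrow> a \<circ> b \<in> A"
    and scA: "\<And>c a. a \<in> A \<Longrightarrow> (\<lambda>x. cscale c (a x)) \<in> A"
    using alg by (auto simp: unital_op_algebra_def)
  have unit: "\<beta> id = id"
  proof
    fix x
    have "((\<lambda>j. u j (id (v j x))) has_sum \<beta> id x) J" by (rule hs[OF idA])
    then have "((\<lambda>j. u j (v j x)) has_sum \<beta> id x) J" by simp
    from has_sum_unique[OF this uv] show "\<beta> id x = id x" by simp
  qed
  have addh: "\<beta> (\<lambda>x. a x + b x) = (\<lambda>x. \<beta> a x + \<beta> b x)" if "a \<in> A" "b \<in> A" for a b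
  proof
    fix x
    have "((\<lambda>j. u j (a (v j x)) + u j (b (v j x))) has_sum (\<beta> a x + \<beta> b x)) J"
      by (intro has_sum_add hs that)
    then have "((\<lambda>j. u j (a (v j x) + b (v j x))) has_sum (\<beta> a x + \<beta> b x)) J"
      by (subst has_sum_cong[where g="\<lambda>j. u j (a (v j x)) + u j (b (v j x))"])
        (auto simp: bounded_clinear_add[OF ubc])
    moreover have "((\<lambda>j. u j (a (v j x) + b (v j x))) has_sum \<beta> (\<lambda>x. a x + b x) x) J"
      using hs[OF addA[OF that]] by simp
    ultimately show "\<beta> (\<lambda>x. a x + b x) x = \<beta> a x + \<beta> b x" using has_sum_unique by blast
  qed
  have sch: "\<beta> (\<lambda>x. cscale c (a x)) = (\<lambda>x. cscale c (\<beta> a x))" if "a \<in> A" for a c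
  proof
    fix x
    have "((\<lambda>j. cscale c (u j (a (v j x)))) has_sum cscale c (\<beta> a x)) J"
      by (rule has_sum_bounded_linear[OF bounded_linear_cscale hs[OF that]])
    then have "((\<lambda>j. u j (cscale c (a (v j x)))) has_sum cscale c (\<beta> a x)) J"
      by (subst has_sum_cong[where g="\<lambda>j. cscale c (u j (a (v j x)))"])
        (auto simp: bounded_clinear_cscale[OF ubc])
    moreover have "((\<lambda>j. u j (cscale c (a (v j x)))) has_sum \<beta> (\<lambda>x. cscale c (a x)) x) J"
      using hs[OF scA[OF that]] by simp
    ultimately show "\<beta> (\<lambda>x. cscale c (a x)) x = cscale c (\<beta> a x)" using has_sum_unique by blast
  qed
  have vbeta: "v k (\<beta> b x) = b (v k x)" if "b \<in> A" "k \<in> J" for b k x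
  proof -
    have "((\<lambda>j. v k (u j (b (v j x)))) has_sum v k (\<beta> b x)) J"
      by (rule has_sum_bounded_linear[OF bounded_clinear_linear[OF vbc[OF that(2)]] hs[OF that(1)]])
    moreover have "((\<lambda>j. v k (u j (b (v j x)))) has_sum (v k (u k (b (v k x))))) J"
    proof (rule has_sum_single_at[OF that(2)])
      fix j assume "j \<in> J" "j \<noteq> k"
      then show "v k (u j (b (v j x))) = 0" using vu[of j k] that(2) by (auto dest: fun_cong[where x="b (v j x)"])
    qed
    moreover have "v k (u k y) = y" for y using vu[of k k] that(2) by (auto dest: fun_cong[where x=y])
    ultimately show ?thesis using has_sum_unique by fastforce
  qed
  have multh: "\<beta> (a \<circ> b) = \<beta> a \<circ> \<beta> b" if "a \<in> A" "b \<in> A" for a b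
  proof
    fix x
    have "((\<lambda>j. u j (a (v j (\<beta> b x)))) has_sum \<beta> a (\<beta> b x)) J" by (rule hs[OF that(1)])
    then have "((\<lambda>j. u j (a (b (v j x)))) has_sum \<beta> a (\<beta> b x)) J"
      by (subst has_sum_cong[where g="\<lambda>j. u j (a (v j (\<beta> b x)))"]) (auto simp: vbeta[OF that(2)])
    moreover have "((\<lambda>j. u j (a (b (v j x)))) has_sum \<beta> (a \<circ> b) x) J"
      using hs[OF compA[OF that]] by simp
    ultimately show "\<beta> (a \<circ> b) x = (\<beta> a \<circ> \<beta> b) x" using has_sum_unique by fastforce
  qed
  show ?thesis
    unfolding unital_endomorphism_def using into unit addh sch multh by blast
qed



lemma has_sum_finsum:
  fixes f :: "'i \<Rightarrow> 'b \<Rightarrow> 'c::topological_comm_monoid_add"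
  assumes "finite I" "\<And>i. i \<in> I \<Longrightarrow> (f i has_sum s i) A"
  shows "((\<lambda>x. \<Sum>i\<in>I. f i x) has_sum (\<Sum>i\<in>I. s i)) A"
  using assms
proof (induction I rule: finite_induct)
  case empty
  then show ?case by simp
next
  case (insert i I)
  have "((\<lambda>x. f i x + (\<Sum>i\<in>I. f i x)) has_sum (s i + (\<Sum>i\<in>I. s i))) A"
    using insert by (intro has_sum_add) auto
  then show ?case using insert by simp
qed

lemma sqrt_le_sq:
  assumes "sqrt L \<le> C * sqrt R" "0 \<le> L" "0 \<le> R" "0 \<le> C"
  shows "L \<le> C\<^sup>2 * R"
proof -
  have "(sqrt L)\<^sup>2 \<le> (C * sqrt R)\<^sup>2" using assms by (intro power_mono) auto
  then show ?thesis using assms by (simp add: power_mult_distrib)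
qed

lemma cb_estimate:
  fixes A :: "('a::chilbert_space \<Rightarrow> 'a) set"
  assumes rb: "row_bound J u Cu" and cb: "col_bound J v Cv" and Cu: "Cu \<ge> 0" and Cv: "Cv \<ge> 0"
    and ubc: "\<And>j. j \<in> J \<Longrightarrow> bounded_clinear (u j)"
    and hs: "\<And>a x. a \<in> A \<Longrightarrow> ((\<lambda>j. u j (a (v j x))) has_sum \<beta> a x) J"
    and aA: "\<And>i j. i < N \<Longrightarrow> j < N \<Longrightarrow> a i j \<in> A"
    and mb: "mat_bound N a C" and C0: "C \<ge> 0"
  shows "(\<Sum>i<N. (norm (\<Sum>j<N. \<beta> (a i j) (x j)))\<^sup>2) \<le> (Cu * Cv * C)\<^sup>2 * (\<Sum>j<N. (norm (x j))\<^sup>2)"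
proof -
  define \<eta> where "\<eta> k i = (\<Sum>j<N. a i j (v k (x j)))" for k i
  define w where "w i = (\<Sum>j<N. \<beta> (a i j) (x j))" for i
  define S where "S = (\<Sum>j<N. (norm (x j))\<^sup>2)"
  have step1: "((\<lambda>k. u k (\<eta> k i)) has_sum w i) J" if i: "i < N" for i
  proof -
    have "((\<lambda>k. \<Sum>j<N. u k (a i j (v k (x j)))) has_sum w i) J"
      unfolding w_def by (rule has_sum_finsum) (auto intro: hs aA i)
    then show ?thesis unfolding \<eta>_def
      by (subst has_sum_cong[where g="\<lambda>k. \<Sum>j<N. u k (a i j (v k (x j)))"])
        (auto simp: linear_sum[OF bounded_linear.linear[OF bounded_clinear_linear[OF ubc]]])
  qed
  have step2: "(\<Sum>i<N. (norm (\<eta> k i))\<^sup>2) \<le> C\<^sup>2 * (\<Sum>j<N. (norm (v k (x j)))\<^sup>2)" for k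
    using mb unfolding mat_bound_def \<eta>_def
    by (intro sqrt_le_sq[OF _ _ _ C0]) (auto intro: sum_nonneg)
  define V where "V j = (\<Sum>\<^sub>\<infinity>k\<in>J. (norm (v k (x j)))\<^sup>2)" for j
  have Vsum: "((\<lambda>k. (norm (v k (x j)))\<^sup>2) has_sum V j) J" for j
    unfolding V_def by (rule has_sum_infsum) (rule col_summable(1)[OF cb])
  have Vle: "V j \<le> (Cv * norm (x j))\<^sup>2" for j
    unfolding V_def by (rule col_summable(2)[OF cb])
  define P where "P k = C\<^sup>2 * (\<Sum>j<N. (norm (v k (x j)))\<^sup>2)" for k
  have Psum: "(P has_sum C\<^sup>2 * (\<Sum>j<N. V j)) J"
    unfolding P_def by (intro has_sum_cmult_right has_sum_finsum Vsum) auto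
  have etasum: "((\<lambda>k. (norm (\<eta> k i))\<^sup>2) summable_on J)" if "i < N" for i
  proof (rule summable_on_comparison_test[where f=P])
    show "P summable_on J" using Psum by (auto simp: summable_on_def)
    fix k assume "k \<in> J"
    have "(norm (\<eta> k i))\<^sup>2 \<le> (\<Sum>i<N. (norm (\<eta> k i))\<^sup>2)"
      using that by (intro member_le_sum) auto
    also have "\<dots> \<le> P k" unfolding P_def by (rule step2)
    finally show "(norm (\<eta> k i))\<^sup>2 \<le> P k" .
  qed simp
  define T where "T i = (\<Sum>\<^sub>\<infinity>k\<in>J. (norm (\<eta> k i))\<^sup>2)" for i
  have step4: "(norm (w i))\<^sup>2 \<le> Cu\<^sup>2 * T i" if i: "i < N" for i
  proof -
    have "norm (\<Sum>\<^sub>\<infinity>k\<in>J. u k (\<eta> k i)) \<le> Cu * sqrt (T i)"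
      unfolding T_def by (rule row_apply(2)[OF rb Cu etasum[OF i]])
    moreover have "(\<Sum>\<^sub>\<infinity>k\<in>J. u k (\<eta> k i)) = w i" by (rule infsumI[OF step1[OF i]])
    ultimately have "norm (w i) \<le> Cu * sqrt (T i)" by simp
    moreover have "0 \<le> T i" unfolding T_def by (intro infsum_nonneg) auto
    ultimately show ?thesis using Cu by (intro sqrt_le_sq) auto
  qed
  have step5: "(\<Sum>i<N. T i) \<le> C\<^sup>2 * (Cv\<^sup>2 * S)"
  proof -
    have h: "((\<lambda>k. \<Sum>i<N. (norm (\<eta> k i))\<^sup>2) has_sum (\<Sum>i<N. T i)) J"
      unfolding T_def by (intro has_sum_finsum has_sum_infsum etasum) auto
    have "(\<Sum>i<N. T i) \<le> C\<^sup>2 * (\<Sum>j<N. V j)"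
      by (rule has_sum_mono[OF h Psum]) (use step2 P_def in auto)
    also have "(\<Sum>j<N. V j) \<le> (\<Sum>j<N. (Cv * norm (x j))\<^sup>2)" by (intro sum_mono Vle)
    also have "\<dots> = Cv\<^sup>2 * S" by (simp add: S_def power_mult_distrib sum_distrib_left)
    finally show ?thesis by (simp add: mult_left_mono)
  qed
  have "(\<Sum>i<N. (norm (w i))\<^sup>2) \<le> (\<Sum>i<N. Cu\<^sup>2 * T i)" by (intro sum_mono step4) auto
  also have "\<dots> = Cu\<^sup>2 * (\<Sum>i<N. T i)" by (simp add: sum_distrib_left)
  also have "\<dots> \<le> Cu\<^sup>2 * (C\<^sup>2 * (Cv\<^sup>2 * S))" by (intro mult_left_mono step5) auto
  also have "\<dots> = (Cu * Cv * C)\<^sup>2 * S" by (simp add: power_mult_distrib)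
  finally show ?thesis unfolding w_def S_def .
qed

lemma single_row_cb:
  fixes A :: "('a::chilbert_space \<Rightarrow> 'a) set"
  assumes alg: "unital_op_algebra A"
    and inv: "invertible_row_with J u v"
    and into: "\<beta> ` A \<subseteq> A"
    and hs: "\<And>a x. a \<in> A \<Longrightarrow> ((\<lambda>j. u j (a (v j x))) has_sum \<beta> a x) J"
  shows "completely_bounded_on A \<beta>"
proof -
  have ubc: "\<And>j. j \<in> J \<Longrightarrow> bounded_clinear (u j)"
    using inv by (auto simp: invertible_row_with_def)
  obtain Cu where rb0: "row_bound J u Cu" using inv by (auto simp: invertible_row_with_def)
  obtain Cv where cb0: "col_bound J v Cv" using inv by (auto simp: invertible_row_with_def)
  define Cu' where "Cu' = max Cu 0"
  define Cv' where "Cv' = max Cv 0"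
  have rb: "row_bound J u Cu'" using rb0 by (rule row_bound_mono) (simp add: Cu'_def)
  have cb: "col_bound J v Cv'" using cb0 by (rule col_bound_mono) (simp add: Cv'_def)
  have Cu: "Cu' \<ge> 0" and Cv: "Cv' \<ge> 0" by (auto simp: Cu'_def Cv'_def)
  have AB: "A \<subseteq> BH" using alg by (simp add: unital_op_algebra_def)
  show ?thesis unfolding completely_bounded_on_def
  proof (intro exI[of _ "Cu' * Cv'"] allI impI)
    fix N a C
    assume aA: "\<forall>i<N. \<forall>j<N. a i j \<in> A" and mb: "mat_bound N a C"
    show "mat_bound N (\<lambda>i j. \<beta> (a i j)) (Cu' * Cv' * C)"
      unfolding mat_bound_def
    proof
      fix x :: "nat \<Rightarrow> 'a"
      define S where "S = (\<Sum>j<N. (norm (x j))\<^sup>2)"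
      define L where "L = (\<Sum>i<N. (norm (\<Sum>j<N. \<beta> (a i j) (x j)))\<^sup>2)"
      have S0: "S \<ge> 0" unfolding S_def by (intro sum_nonneg) auto
      have L0: "L \<ge> 0" unfolding L_def by (intro sum_nonneg) auto
      show "sqrt L \<le> Cu' * Cv' * C * sqrt S"
      proof (cases "C \<ge> 0")
        case True
        have "L \<le> (Cu' * Cv' * C)\<^sup>2 * S"
          unfolding L_def S_def
          by (rule cb_estimate[OF rb cb Cu Cv ubc hs _ mb True]) (use aA in auto)
        then have "sqrt L \<le> sqrt ((Cu' * Cv' * C)\<^sup>2 * S)" by (rule real_sqrt_le_mono)
        also have "\<dots> = Cu' * Cv' * C * sqrt S"
          using True Cu Cv by (simp add: real_sqrt_mult)
        finally show ?thesis .
      next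
        case False
        have "sqrt (\<Sum>i<N. (norm (\<Sum>j<N. a i j (x j)))\<^sup>2) \<le> C * sqrt S"
          using mb unfolding mat_bound_def S_def by blast
        moreover have "0 \<le> sqrt (\<Sum>i<N. (norm (\<Sum>j<N. a i j (x j)))\<^sup>2)"
          by (intro real_sqrt_ge_zero sum_nonneg) auto
        ultimately have "0 \<le> C * sqrt S" by linarith
        then have "sqrt S \<le> 0" using False by (simp add: zero_le_mult_iff)
        then have "S = 0" using S0 by simp
        then have x0: "\<And>j. j < N \<Longrightarrow> x j = 0"
          unfolding S_def by (subst (asm) sum_nonneg_eq_0_iff) auto
        have "\<beta> (a i j) (x j) = 0" if "i < N" "j < N" for i j
        proof -
          have "\<beta> (a i j) \<in> A" using into aA that by blast
          then have "bounded_clinear (\<beta> (a i j))" using AB by (auto simp: BH_def)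
          then show ?thesis using x0[OF that(2)] by (simp add: bounded_clinear_zero)
        qed
        then have "L = 0" unfolding L_def by simp
        then show ?thesis using \<open>S = 0\<close> by simp
      qed
    qed
  qed
qed



lemma cinner_sum_right: "cinner y (\<Sum>j\<in>F. f j) = (\<Sum>j\<in>F. cinner y (f j))"
  by (rule linear_sum[OF bounded_linear.linear[OF bounded_linear_cinner_right]])

lemma adjoint_col_bound:
  fixes u u' :: "'b \<Rightarrow> 'a::chilbert_space \<Rightarrow> 'a"
  assumes rb: "row_bound J u C" and C: "C \<ge> 0"
    and adj: "\<And>j y z. j \<in> J \<Longrightarrow> cinner y (u j z) = cinner (u' j y) z"
  shows "col_bound J u' C"
  unfolding col_bound_def
proof (intro allI impI)
  fix y F assume F: "finite F \<and> F \<subseteq> J"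
  define Q where "Q = (\<Sum>j\<in>F. (norm (u' j y))\<^sup>2)"
  have Q0: "Q \<ge> 0" unfolding Q_def by (intro sum_nonneg) auto
  have "complex_of_real Q = (\<Sum>j\<in>F. cinner (u' j y) (u' j y))"
    unfolding Q_def by (simp add: cinner_self)
  also have "\<dots> = (\<Sum>j\<in>F. cinner y (u j (u' j y)))"
    using F by (intro sum.cong) (auto simp: adj)
  also have "\<dots> = cinner y (\<Sum>j\<in>F. u j (u' j y))" by (simp add: cinner_sum_right)
  finally have "Q = cmod (cinner y (\<Sum>j\<in>F. u j (u' j y)))"
    by (metis Q0 abs_of_nonneg norm_of_real)
  also have "\<dots> \<le> norm y * norm (\<Sum>j\<in>F. u j (u' j y))" by (rule cauchy_schwarz)
  also have "\<dots> \<le> norm y * (C * sqrt Q)"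
    unfolding Q_def using rb F by (intro mult_left_mono) (auto simp: row_bound_def)
  finally have QQ: "sqrt Q * sqrt Q \<le> (C * norm y) * sqrt Q" using Q0 by (simp add: algebra_simps)
  have "sqrt Q \<le> C * norm y"
  proof (cases "sqrt Q = 0")
    case True then show ?thesis using C by simp
  next
    case False
    then have "sqrt Q > 0" using Q0 by simp
    then show ?thesis by (rule mult_right_le_imp_le[OF QQ])
  qed
  then show "sqrt (\<Sum>j\<in>F. (norm (u' j y))\<^sup>2) \<le> C * norm y" by (simp add: Q_def)
qed

lemma pack_l2:
  fixes c :: "nat \<Rightarrow> 'a::chilbert_space \<Rightarrow> 'a" and z :: "nat \<Rightarrow> 'a"
  assumes cb: "col_bound J c K" and sz: "summable (\<lambda>k. (norm (z k))\<^sup>2)"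
  shows "(\<lambda>(k, j). if j \<in> J then (norm (c j (z k)))\<^sup>2 else 0) summable_on (UNIV :: (nat \<times> nat) set)"
proof -
  define G where "G k = (\<Sum>\<^sub>\<infinity>j\<in>J. (norm (c j (z k)))\<^sup>2)" for k
  have inner: "((\<lambda>j. (\<lambda>(k, j). if j \<in> J then (norm (c j (z k)))\<^sup>2 else 0) (k, j)) has_sum G k) UNIV" for k
  proof -
    have "((\<lambda>j. (norm (c j (z k)))\<^sup>2) has_sum G k) J"
      unfolding G_def by (rule has_sum_infsum) (rule col_summable(1)[OF cb])
    then show ?thesis by (subst has_sum_cong_neutral[where T=J]) auto
  qed
  have Gle: "G k \<le> K\<^sup>2 * (norm (z k))\<^sup>2" for k
    using col_summable(2)[OF cb, of "z k"] unfolding G_def by (simp add: power_mult_distrib)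
  have "G summable_on UNIV"
  proof (rule summable_on_comparison_test)
    show "(\<lambda>k. K\<^sup>2 * (norm (z k))\<^sup>2) summable_on UNIV"
      by (intro summable_on_cmult_right summable_nonneg_imp_summable_on sz) auto
    show "G k \<le> K\<^sup>2 * (norm (z k))\<^sup>2" for k by (rule Gle)
    show "0 \<le> G k" for k unfolding G_def by (intro infsum_nonneg) auto
  qed
  then have "(\<lambda>(k, j). if j \<in> J then (norm (c j (z k)))\<^sup>2 else 0) summable_on Sigma UNIV (\<lambda>_. UNIV)"
    by (rule summable_on_SigmaI[OF inner]) auto
  then show ?thesis by simp
qed

lemma pack_l2_nat:
  fixes c :: "nat \<Rightarrow> 'a::chilbert_space \<Rightarrow> 'a" and z :: "nat \<Rightarrow> 'a"
  assumes cb: "col_bound J c K" and sz: "summable (\<lambda>k. (norm (z k))\<^sup>2)"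
  shows "summable (\<lambda>m. (norm ((\<lambda>(k, j). if j \<in> J then c j (z k) else 0) (prod_decode m)))\<^sup>2)"
proof -
  let ?g = "\<lambda>(k, j). if j \<in> J then (norm (c j (z k)))\<^sup>2 else (0::real)"
  have "?g summable_on (prod_decode ` UNIV)"
    using pack_l2[OF cb sz] bij_prod_decode by (simp add: bij_def)
  then have "(?g \<circ> prod_decode) summable_on UNIV"
    using summable_on_reindex[of prod_decode UNIV ?g] bij_prod_decode by (simp add: bij_def)
  moreover have "(?g \<circ> prod_decode) = (\<lambda>m. (norm ((\<lambda>(k, j). if j \<in> J then c j (z k) else 0) (prod_decode m)))\<^sup>2)"
    by (auto simp: fun_eq_iff split: prod.splits)
  ultimately show ?thesis
    by (subst summable_on_UNIV_nonneg_real_iff[symmetric]) auto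
qed



lemma normal_comp:
  fixes A :: "('a::chilbert_space \<Rightarrow> 'a) set" and J :: "nat set"
  assumes inv: "invertible_row_with J u v"
    and AB: "A \<subseteq> BH"
    and hs: "\<And>a x. a \<in> A \<Longrightarrow> ((\<lambda>j. u j (a (v j x))) has_sum \<beta> a x) J"
    and om: "\<omega> \<in> normal_functionals"
  shows "\<exists>\<omega>'\<in>normal_functionals. \<forall>a\<in>A. \<omega> (\<beta> a) = \<omega>' a"
proof -
  obtain x y where om_def: "\<omega> = (\<lambda>T. \<Sum>k. cinner (y k) (T (x k)))"
    and sx: "summable (\<lambda>k. (norm (x k))\<^sup>2)" and sy: "summable (\<lambda>k. (norm (y k))\<^sup>2)"
    using om unfolding normal_functionals_def by blast
  have ubc: "\<And>j. j \<in> J \<Longrightarrow> bounded_clinear (u j)" and vbc: "\<And>j. j \<in> J \<Longrightarrow> bounded_clinear (v j)"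
    using inv by (auto simp: invertible_row_with_def)
  obtain Cu0 where rb0: "row_bound J u Cu0" using inv by (auto simp: invertible_row_with_def)
  obtain Cv0 where cb0: "col_bound J v Cv0" using inv by (auto simp: invertible_row_with_def)
  define Cu where "Cu = max Cu0 0"
  define Cv where "Cv = max Cv0 0"
  have rb: "row_bound J u Cu" using rb0 by (rule row_bound_mono) (simp add: Cu_def)
  have cb: "col_bound J v Cv" using cb0 by (rule col_bound_mono) (simp add: Cv_def)
  have Cu0: "Cu \<ge> 0" by (simp add: Cu_def)
  have "\<forall>j. \<exists>w. j \<in> J \<longrightarrow> (\<forall>y z. cinner y (u j z) = cinner (w y) z)"
    using adjoint_exists[OF ubc] by blast
  from choice[OF this] obtain u' where adj: "\<And>j y z. j \<in> J \<Longrightarrow> cinner y (u j z) = cinner (u' j y) z"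
    by blast
  have cbu: "col_bound J u' Cu" by (rule adjoint_col_bound[OF rb Cu0 adj])
  define X where "X m = (\<lambda>(k, j). if j \<in> J then v j (x k) else 0) (prod_decode m)" for m
  define Y where "Y m = (\<lambda>(k, j). if j \<in> J then u' j (y k) else 0) (prod_decode m)" for m
  define \<omega>' where "\<omega>' = (\<lambda>T. \<Sum>m. cinner (Y m) (T (X m)))"
  have sX: "summable (\<lambda>m. (norm (X m))\<^sup>2)" unfolding X_def by (rule pack_l2_nat[OF cb sx])
  have sY: "summable (\<lambda>m. (norm (Y m))\<^sup>2)" unfolding Y_def by (rule pack_l2_nat[OF cbu sy])
  have om': "\<omega>' \<in> normal_functionals"
    unfolding normal_functionals_def \<omega>'_def using sX sY by blast
  have "\<omega> (\<beta> a) = \<omega>' a" if aA: "a \<in> A" for a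
  proof -
    have abl: "bounded_linear a" and abc: "bounded_clinear a"
      using AB aA by (auto simp: BH_def bounded_clinear_def)
    define B where "B = onorm a"
    have B0: "B \<ge> 0" unfolding B_def by (rule onorm_pos_le[OF abl])
    have aB: "norm (a z) \<le> B * norm z" for z unfolding B_def by (rule onorm[OF abl])
    define h where "h = (\<lambda>(k, j). if j \<in> J then cinner (u' j (y k)) (a (v j (x k))) else 0)"
    define gX where "gX = (\<lambda>(k, j). if j \<in> J then (norm (v j (x k)))\<^sup>2 else (0::real))"
    define gY where "gY = (\<lambda>(k, j). if j \<in> J then (norm (u' j (y k)))\<^sup>2 else (0::real))"
    have sgX: "gX summable_on UNIV" unfolding gX_def by (rule pack_l2[OF cb sx])
    have sgY: "gY summable_on UNIV" unfolding gY_def by (rule pack_l2[OF cbu sy])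
    have hle: "norm (h p) \<le> B * (gY p + gX p)" for p
    proof (cases p)
      case (Pair k j)
      show ?thesis
      proof (cases "j \<in> J")
        case True
        define P where "P = norm (u' j (y k))"
        define Q where "Q = norm (v j (x k))"
        have "norm (h p) = cmod (cinner (u' j (y k)) (a (v j (x k))))" using True by (simp add: h_def Pair)
        also have "\<dots> \<le> P * norm (a (v j (x k)))" unfolding P_def by (rule cauchy_schwarz)
        also have "\<dots> \<le> P * (B * Q)" unfolding Q_def by (intro mult_left_mono aB) (simp add: P_def)
        also have "\<dots> \<le> B * (P\<^sup>2 + Q\<^sup>2)"
        proof -
          have "P * Q \<le> P\<^sup>2 + Q\<^sup>2"
          proof -
            have "0 \<le> (P - Q)\<^sup>2" by simp
            moreover have "(P - Q)\<^sup>2 = P\<^sup>2 - 2 * P * Q + Q\<^sup>2" by (simp add: power2_diff)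
            moreover have "0 \<le> P\<^sup>2" "0 \<le> Q\<^sup>2" by simp_all
            ultimately show ?thesis by linarith
          qed
          then have "B * (P * Q) \<le> B * (P\<^sup>2 + Q\<^sup>2)" using B0 by (rule mult_left_mono)
          then show ?thesis by (simp add: algebra_simps)
        qed
        also have "\<dots> = B * (gY p + gX p)" using True by (simp add: gX_def gY_def Pair P_def Q_def)
        finally show ?thesis .
      next
        case False then show ?thesis by (simp add: h_def gX_def gY_def Pair)
      qed
    qed
    have habs: "(\<lambda>p. norm (h p)) summable_on UNIV"
    proof (rule summable_on_comparison_test)
      show "(\<lambda>p. B * (gY p + gX p)) summable_on UNIV"
        by (intro summable_on_cmult_right summable_on_add sgX sgY)
    qed (auto intro: hle)
    then have hsum: "h summable_on UNIV" by (rule abs_summable_summable)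
    define H where "H = infsum h UNIV"
    have hH: "(h has_sum H) UNIV" unfolding H_def by (rule has_sum_infsum[OF hsum])
    have om'a: "\<omega>' a = H"
    proof -
      have eq: "(\<lambda>m. cinner (Y m) (a (X m))) = h \<circ> prod_decode"
      proof
        fix m
        obtain k j where kj: "prod_decode m = (k, j)" by (cases "prod_decode m")
        show "cinner (Y m) (a (X m)) = (h \<circ> prod_decode) m"
          by (cases "j \<in> J") (simp_all add: X_def Y_def h_def kj bounded_clinear_zero[OF abc])
      qed
      have "(h has_sum H) (prod_decode ` UNIV)"
        using hH bij_prod_decode by (simp add: bij_def)
      then have "((h \<circ> prod_decode) has_sum H) UNIV"
        using has_sum_reindex[of prod_decode UNIV h H] bij_prod_decode by (simp add: bij_def)
      then have "(h \<circ> prod_decode) sums H" by (rule has_sum_imp_sums)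
      then show ?thesis unfolding \<omega>'_def eq by (simp add: sums_iff)
    qed
    have om_a: "\<omega> (\<beta> a) = H"
    proof -
      have inner: "((\<lambda>j. h (k, j)) has_sum cinner (y k) (\<beta> a (x k))) UNIV" for k
      proof -
        have "((\<lambda>j. cinner (y k) (u j (a (v j (x k))))) has_sum cinner (y k) (\<beta> a (x k))) J"
          by (rule has_sum_bounded_linear[OF bounded_linear_cinner_right hs[OF aA]])
        then have "((\<lambda>j. h (k, j)) has_sum cinner (y k) (\<beta> a (x k))) J"
          by (subst has_sum_cong[where g="\<lambda>j. cinner (y k) (u j (a (v j (x k))))"]) (auto simp: h_def adj)
        then show ?thesis by (subst has_sum_cong_neutral[where T=J]) (auto simp: h_def)
      qed
      have "(h has_sum H) (Sigma UNIV (\<lambda>_. UNIV))" using hH by simp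
      then have "((\<lambda>k. cinner (y k) (\<beta> a (x k))) has_sum H) UNIV"
        by (rule has_sum_SigmaD) (rule inner)
      then have "(\<lambda>k. cinner (y k) (\<beta> a (x k))) sums H" by (rule has_sum_imp_sums)
      then show ?thesis unfolding om_def by (simp add: sums_iff)
    qed
    show ?thesis using om'a om_a by simp
  qed
  then show ?thesis using om' by blast
qed



lemma single_row_wstar:
  fixes A :: "('a::chilbert_space \<Rightarrow> 'a) set" and J :: "nat set"
  assumes alg: "unital_op_algebra A"
    and inv: "invertible_row_with J u v"
    and into: "\<beta> ` A \<subseteq> A"
    and hs: "\<And>a x. a \<in> A \<Longrightarrow> ((\<lambda>j. u j (a (v j x))) has_sum \<beta> a x) J"
  shows "wstar_continuous_on A \<beta>"
proof -
  define SS :: "('a \<Rightarrow> 'a) set set" where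
    "SS = {{T. \<omega> T \<in> U} | \<omega> U. \<omega> \<in> normal_functionals \<and> open U}"
  define G where "G = topology_generated_by SS"
  have AB: "A \<subseteq> BH" using alg by (simp add: unital_op_algebra_def)
  have wt: "wstar_topology = subtopology G BH"
    unfolding wstar_topology_def G_def SS_def by simp
  have om0: "(\<lambda>T. \<Sum>k. cinner ((\<lambda>_. 0) k) (T ((\<lambda>_. 0) k))) \<in> normal_functionals"
    unfolding normal_functionals_def
    by (rule CollectI, rule exI[of _ "\<lambda>_. 0"], rule exI[of _ "\<lambda>_. 0"]) simp
  have "UNIV \<in> SS" unfolding SS_def using om0 by blast
  then have topG: "topspace G = UNIV" unfolding G_def by auto
  define X where "X = subtopology wstar_topology A"
  have X_eq: "X = subtopology G A" unfolding X_def wt subtopology_subtopology using AB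
    by (simp add: Int_absorb1)
  have topX: "topspace X = A" unfolding X_eq by (simp add: topG)
  have "continuous_map X G \<beta>"
  proof (rule continuous_on_generated_topo[of SS X \<beta>, folded G_def])
    fix U assume "U \<in> SS"
    then obtain \<omega> V where U: "U = {T. \<omega> T \<in> V}" and om: "\<omega> \<in> normal_functionals" and V: "open V"
      unfolding SS_def by blast
    obtain \<omega>' where om': "\<omega>' \<in> normal_functionals" and eq: "\<And>a. a \<in> A \<Longrightarrow> \<omega> (\<beta> a) = \<omega>' a"
      using normal_comp[OF inv AB hs om] by blast
    have "\<beta> -` U \<inter> topspace X = {T. \<omega>' T \<in> V} \<inter> A"
      unfolding topX U using eq by auto
    moreover have "openin G {T. \<omega>' T \<in> V}"
      unfolding G_def by (rule topology_generated_by_Basis) (use om' V SS_def in blast)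
    ultimately show "openin X (\<beta> -` U \<inter> topspace X)"
      unfolding X_eq openin_subtopology by blast
  next
    show "\<beta> ` topspace X \<subseteq> \<Union> SS" using \<open>UNIV \<in> SS\<close> by blast
  qed
  then have "continuous_map X wstar_topology \<beta>"
    unfolding wt continuous_map_in_subtopology using into AB topX by auto
  then have "continuous_map X (subtopology wstar_topology A) \<beta>"
    unfolding continuous_map_in_subtopology using into topX by auto
  then show ?thesis unfolding wstar_continuous_on_def X_def .
qed



lemma word_idx_Nil: "word_idx n [] = {[]}"
  by (auto simp: word_idx_def)

lemma word_idx_Cons: "word_idx n (i # \<mu>) = (\<lambda>(j, J). j # J) ` (row_idx n i \<times> word_idx n \<mu>)"
proof
  show "word_idx n (i # \<mu>) \<subseteq> (\<lambda>(j, J). j # J) ` (row_idx n i \<times> word_idx n \<mu>)"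
  proof
    fix K assume K: "K \<in> word_idx n (i # \<mu>)"
    then obtain j J where KJ: "K = j # J" by (cases K) (auto simp: word_idx_def)
    have "j \<in> row_idx n i" using K KJ by (force simp: word_idx_def row_idx_def)
    moreover have "J \<in> word_idx n \<mu>"
    proof -
      have "length J = length \<mu>" using K KJ by (simp add: word_idx_def)
      moreover have "enat (J ! k) < n (\<mu> ! k)" if "k < length \<mu>" for k
        using K KJ that unfolding word_idx_def by (auto dest!: spec[where x="Suc k"])
      ultimately show ?thesis by (simp add: word_idx_def)
    qed
    ultimately show "K \<in> (\<lambda>(j, J). j # J) ` (row_idx n i \<times> word_idx n \<mu>)" using KJ by blast
  qed
next
  show "(\<lambda>(j, J). j # J) ` (row_idx n i \<times> word_idx n \<mu>) \<subseteq> word_idx n (i # \<mu>)"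
  proof clarify
    fix j J assume j: "j \<in> row_idx n i" and J: "J \<in> word_idx n \<mu>"
    show "j # J \<in> word_idx n (i # \<mu>)"
      unfolding word_idx_def
    proof (intro CollectI conjI allI impI)
      show "length (j # J) = length (i # \<mu>)" using J by (simp add: word_idx_def)
      fix k assume "k < length (i # \<mu>)"
      then show "enat ((j # J) ! k) < n ((i # \<mu>) ! k)"
        using j J by (cases k) (auto simp: word_idx_def row_idx_def)
    qed
  qed
qed

lemma inj_cons_pair: "inj_on (\<lambda>(j, J). j # J) X"
  by (auto simp: inj_on_def)

lemma word_expand:
  fixes A :: "('a::chilbert_space \<Rightarrow> 'a) set"
  assumes AB: "A \<subseteq> BH"
    and hsall: "\<And>i a x. i \<in> letters d \<Longrightarrow> a \<in> A \<Longrightarrow> ((\<lambda>j. u i j (a (v i j x))) has_sum \<alpha> i a x) (row_idx n i)"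
    and into: "\<And>i. i \<in> letters d \<Longrightarrow> \<alpha> i ` A \<subseteq> A"
    and ubc: "\<And>i j. i \<in> letters d \<Longrightarrow> j \<in> row_idx n i \<Longrightarrow> bounded_clinear (u i j)"
    and unif: "\<And>\<mu>. set \<mu> \<subseteq> letters d \<Longrightarrow> row_bound (word_idx n \<mu>) (hat_u u \<mu>) C \<and> col_bound (word_idx n \<mu>) (hat_v v \<mu>) C"
    and C0: "C \<ge> 0"
  shows "set \<mu> \<subseteq> letters d \<Longrightarrow> a \<in> A \<Longrightarrow> alpha_word \<alpha> \<mu> a \<in> A \<and>
     (\<forall>x. ((\<lambda>J. hat_u u \<mu> J (a (hat_v v \<mu> J x))) has_sum alpha_word \<alpha> \<mu> a x) (word_idx n \<mu>))"
proof (induction \<mu>)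
  case Nil
  have "((\<lambda>J. hat_u u [] J (a (hat_v v [] J x))) has_sum alpha_word \<alpha> [] a x) (word_idx n [])" for x
    unfolding word_idx_Nil using has_sum_finite[of "{[]}" "\<lambda>J. hat_u u [] J (a (hat_v v [] J x))"] by simp
  then show ?case using Nil by simp
next
  case (Cons i \<mu>)
  have i: "i \<in> letters d" and \<mu>: "set \<mu> \<subseteq> letters d" using Cons.prems by auto
  define b where "b = alpha_word \<alpha> \<mu> a"
  have bA: "b \<in> A" and bhs: "\<And>x. ((\<lambda>J. hat_u u \<mu> J (a (hat_v v \<mu> J x))) has_sum b x) (word_idx n \<mu>)"
    using Cons.IH[OF \<mu> Cons.prems(2)] by (auto simp: b_def)
  have aw: "alpha_word \<alpha> (i # \<mu>) a = \<alpha> i b" by (simp add: b_def)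
  have inA: "alpha_word \<alpha> (i # \<mu>) a \<in> A" using into[OF i] bA aw by auto
  have abl: "bounded_linear a" using AB Cons.prems(2) by (auto simp: BH_def bounded_clinear_def)
  define B where "B = onorm a"
  have aB: "norm (a z) \<le> B * norm z" for z unfolding B_def by (rule onorm[OF abl])
  have B0: "B \<ge> 0" unfolding B_def by (rule onorm_pos_le[OF abl])
  have rbw: "row_bound (word_idx n (i # \<mu>)) (hat_u u (i # \<mu>)) C"
    and cbw: "col_bound (word_idx n (i # \<mu>)) (hat_v v (i # \<mu>)) C"
    using unif[of "i # \<mu>"] i \<mu> by auto
  have "((\<lambda>J. hat_u u (i # \<mu>) J (a (hat_v v (i # \<mu>) J x))) has_sum \<alpha> i b x) (word_idx n (i # \<mu>))" for x
  proof -
    let ?W = "word_idx n (i # \<mu>)"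
    let ?G = "\<lambda>J. hat_u u (i # \<mu>) J (a (hat_v v (i # \<mu>) J x))"
    have sq: "(\<lambda>J. (norm (a (hat_v v (i # \<mu>) J x)))\<^sup>2) summable_on ?W"
    proof (rule summable_on_comparison_test)
      show "(\<lambda>J. B\<^sup>2 * (norm (hat_v v (i # \<mu>) J x))\<^sup>2) summable_on ?W"
        by (intro summable_on_cmult_right col_summable(1)[OF cbw])
      show "(norm (a (hat_v v (i # \<mu>) J x)))\<^sup>2 \<le> B\<^sup>2 * (norm (hat_v v (i # \<mu>) J x))\<^sup>2" for J
      proof -
        have "(norm (a (hat_v v (i # \<mu>) J x)))\<^sup>2 \<le> (B * norm (hat_v v (i # \<mu>) J x))\<^sup>2"
          by (intro power_mono aB) simp
        then show ?thesis by (simp add: power_mult_distrib)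
      qed
    qed simp
    have Gs: "?G summable_on ?W" by (rule row_apply(1)[OF rbw C0 sq])
    then obtain S where GS: "(?G has_sum S) ?W" by (auto simp: summable_on_def)
    then have "((?G \<circ> (\<lambda>(j, J). j # J)) has_sum S) (row_idx n i \<times> word_idx n \<mu>)"
      unfolding word_idx_Cons by (subst (asm) has_sum_reindex[OF inj_cons_pair])
    then have GS2: "((\<lambda>(j, J). u i j (hat_u u \<mu> J (a (hat_v v \<mu> J (v i j x))))) has_sum S)
        (Sigma (row_idx n i) (\<lambda>_. word_idx n \<mu>))"
      by (simp add: case_prod_unfold o_def)
    have inner: "((\<lambda>J. (\<lambda>(j, J). u i j (hat_u u \<mu> J (a (hat_v v \<mu> J (v i j x))))) (j, J)) has_sum u i j (b (v i j x)))
        (word_idx n \<mu>)" if j: "j \<in> row_idx n i" for j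
      using has_sum_bounded_linear[OF bounded_clinear_linear[OF ubc[OF i j]] bhs[of "v i j x"]] by simp
    have "((\<lambda>j. u i j (b (v i j x))) has_sum S) (row_idx n i)"
      by (rule has_sum_SigmaD[OF GS2 inner])
    moreover have "((\<lambda>j. u i j (b (v i j x))) has_sum \<alpha> i b x) (row_idx n i)" by (rule hsall[OF i bA])
    ultimately have "S = \<alpha> i b x" by (rule has_sum_unique)
    then show ?thesis using GS by simp
  qed
  then show ?case using inA aw by simp
qed

lemma word_norm_bound:
  fixes A :: "('a::chilbert_space \<Rightarrow> 'a) set"
  assumes AB: "A \<subseteq> BH" and aA: "a \<in> A"
    and hs: "\<And>x. ((\<lambda>J. hat_u u \<mu> J (a (hat_v v \<mu> J x))) has_sum f x) W"
    and rb: "row_bound W (hat_u u \<mu>) C" and cb: "col_bound W (hat_v v \<mu>) C" and C0: "C \<ge> 0"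
  shows "onorm f \<le> C\<^sup>2 * onorm a"
proof -
  have abl: "bounded_linear a" using AB aA by (auto simp: BH_def bounded_clinear_def)
  define B where "B = onorm a"
  have aB: "norm (a z) \<le> B * norm z" for z unfolding B_def by (rule onorm[OF abl])
  have B0: "B \<ge> 0" unfolding B_def by (rule onorm_pos_le[OF abl])
  have pt: "norm (f x) \<le> C\<^sup>2 * B * norm x" for x
  proof -
    have sv: "(\<lambda>J. (norm (hat_v v \<mu> J x))\<^sup>2) summable_on W" by (rule col_summable(1)[OF cb])
    have sq: "(\<lambda>J. (norm (a (hat_v v \<mu> J x)))\<^sup>2) summable_on W"
    proof (rule summable_on_comparison_test)
      show "(\<lambda>J. B\<^sup>2 * (norm (hat_v v \<mu> J x))\<^sup>2) summable_on W"
        by (intro summable_on_cmult_right sv)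
      show "(norm (a (hat_v v \<mu> J x)))\<^sup>2 \<le> B\<^sup>2 * (norm (hat_v v \<mu> J x))\<^sup>2" for J
      proof -
        have "(norm (a (hat_v v \<mu> J x)))\<^sup>2 \<le> (B * norm (hat_v v \<mu> J x))\<^sup>2"
          by (intro power_mono aB) simp
        then show ?thesis by (simp add: power_mult_distrib)
      qed
    qed simp
    have "f x = (\<Sum>\<^sub>\<infinity>J\<in>W. hat_u u \<mu> J (a (hat_v v \<mu> J x)))" by (rule infsumI[OF hs, symmetric])
    then have "norm (f x) \<le> C * sqrt (\<Sum>\<^sub>\<infinity>J\<in>W. (norm (a (hat_v v \<mu> J x)))\<^sup>2)"
      using row_apply(2)[OF rb C0 sq] by simp
    also have "(\<Sum>\<^sub>\<infinity>J\<in>W. (norm (a (hat_v v \<mu> J x)))\<^sup>2) \<le> (\<Sum>\<^sub>\<infinity>J\<in>W. B\<^sup>2 * (norm (hat_v v \<mu> J x))\<^sup>2)"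
    proof (rule infsum_mono[OF sq])
      show "(\<lambda>J. B\<^sup>2 * (norm (hat_v v \<mu> J x))\<^sup>2) summable_on W" by (intro summable_on_cmult_right sv)
      show "(norm (a (hat_v v \<mu> J x)))\<^sup>2 \<le> B\<^sup>2 * (norm (hat_v v \<mu> J x))\<^sup>2" for J
      proof -
        have "(norm (a (hat_v v \<mu> J x)))\<^sup>2 \<le> (B * norm (hat_v v \<mu> J x))\<^sup>2"
          by (intro power_mono aB) simp
        then show ?thesis by (simp add: power_mult_distrib)
      qed
    qed
    also have "(\<Sum>\<^sub>\<infinity>J\<in>W. B\<^sup>2 * (norm (hat_v v \<mu> J x))\<^sup>2) = B\<^sup>2 * (\<Sum>\<^sub>\<infinity>J\<in>W. (norm (hat_v v \<mu> J x))\<^sup>2)"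
      by (rule infsum_cmult_right') 
    also have "\<dots> \<le> B\<^sup>2 * (C * norm x)\<^sup>2"
      by (intro mult_left_mono col_summable(2)[OF cb]) simp
    finally have "norm (f x) \<le> C * sqrt (B\<^sup>2 * (C * norm x)\<^sup>2)"
      using C0 by (simp add: mult_left_mono)
    also have "\<dots> = C\<^sup>2 * B * norm x"
      using C0 B0 by (simp add: real_sqrt_mult power2_eq_square)
    finally show ?thesis .
  qed
  show ?thesis
    unfolding B_def[symmetric] onorm_def[of f]
  proof (rule cSUP_least)
    fix x assume "x \<in> (UNIV :: 'a set)"
    show "norm (f x) / norm x \<le> C\<^sup>2 * B"
    proof (cases "norm x = 0")
      case True then show ?thesis using C0 B0 by simp
    next
      case False
      then have "norm x > 0" by simp
      then show ?thesis using pt[of x] by (simp add: divide_le_eq)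
    qed
  qed simp
qed



theorem proposition3p4:
  fixes A :: "('a::chilbert_space \<Rightarrow> 'a) set"
    and d :: enat and n :: "nat \<Rightarrow> enat"
    and u v :: "nat \<Rightarrow> nat \<Rightarrow> 'a \<Rightarrow> 'a"
    and \<alpha> :: "nat \<Rightarrow> ('a \<Rightarrow> 'a) \<Rightarrow> ('a \<Rightarrow> 'a)"
  assumes "d \<ge> 1"
    and "unital_op_algebra A"
    and "wstar_closed A"
    and "ub_spatial_action A d n u v \<alpha>"
  shows "unital_wstar_dynamical_system A d \<alpha>"
proof -
  have alg: "unital_op_algebra A" by fact
  have AB: "A \<subseteq> BH" using alg by (simp add: unital_op_algebra_def)
  have ub: "uniformly_bounded d n u v"
    and into: "\<And>i. i \<in> letters d \<Longrightarrow> \<alpha> i ` A \<subseteq> A"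
    and hs: "\<And>i a x. i \<in> letters d \<Longrightarrow> a \<in> A \<Longrightarrow> ((\<lambda>j. u i j (a (v i j x))) has_sum \<alpha> i a x) (row_idx n i)"
    using assms(4) unfolding ub_spatial_action_def by blast+
  have inv: "\<And>i. i \<in> letters d \<Longrightarrow> invertible_row_with (row_idx n i) (u i) (v i)"
    using ub unfolding uniformly_bounded_def by blast
  obtain C0 where unif0: "\<And>\<mu>. set \<mu> \<subseteq> letters d \<Longrightarrow>
      row_bound (word_idx n \<mu>) (hat_u u \<mu>) C0 \<and> col_bound (word_idx n \<mu>) (hat_v v \<mu>) C0"
    using ub unfolding uniformly_bounded_def by blast
  define C where "C = max C0 0"
  have C0: "C \<ge> 0" by (simp add: C_def)
  have unif: "row_bound (word_idx n \<mu>) (hat_u u \<mu>) C \<and> col_bound (word_idx n \<mu>) (hat_v v \<mu>) C"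
    if "set \<mu> \<subseteq> letters d" for \<mu>
    using unif0[OF that] by (auto intro: row_bound_mono col_bound_mono simp: C_def)
  have ubc: "\<And>i j. i \<in> letters d \<Longrightarrow> j \<in> row_idx n i \<Longrightarrow> bounded_clinear (u i j)"
    using inv by (auto simp: invertible_row_with_def)
  have part1: "unital_endomorphism A (\<alpha> i) \<and> wstar_continuous_on A (\<alpha> i) \<and> completely_bounded_on A (\<alpha> i)"
    if i: "i \<in> letters d" for i
  proof (intro conjI)
    show "unital_endomorphism A (\<alpha> i)"
      by (rule single_row_endo[OF alg inv[OF i] into[OF i] hs[OF i]])
    show "wstar_continuous_on A (\<alpha> i)"
      by (rule single_row_wstar[OF alg inv[OF i] into[OF i] hs[OF i]])
    show "completely_bounded_on A (\<alpha> i)"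
      by (rule single_row_cb[OF alg inv[OF i] into[OF i] hs[OF i]])
  qed
  have part2: "\<forall>\<mu>. set \<mu> \<subseteq> letters d \<longrightarrow> (\<forall>a\<in>A. onorm (alpha_word \<alpha> \<mu> a) \<le> C\<^sup>2 * onorm a)"
  proof (intro allI impI ballI)
    fix \<mu> a assume \<mu>: "set \<mu> \<subseteq> letters d" and aA: "a \<in> A"
    have exp: "\<And>x. ((\<lambda>J. hat_u u \<mu> J (a (hat_v v \<mu> J x))) has_sum alpha_word \<alpha> \<mu> a x) (word_idx n \<mu>)"
      using word_expand[OF AB hs into ubc unif C0 \<mu> aA] by blast
    show "onorm (alpha_word \<alpha> \<mu> a) \<le> C\<^sup>2 * onorm a"
      by (rule word_norm_bound[OF AB aA exp]) (use unif[OF \<mu>] C0 in auto)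
  qed
  show ?thesis
    unfolding unital_wstar_dynamical_system_def using part1 part2 by blast
qed

end
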